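(* Let $X$ be a set, let $\mathcal C\subseteq\mathcal P(X)$ be a family of sets, and let $T:\mathcal C\to\mathcal C$ be an order reversing quasi involution on $\mathcal C$ which respects inclusions. Then there exists an order reversing quasi involution $\hat T:\mathcal P(X)\to\mathcal P(X)$ with $\hat T|_{\mathcal C}=T$.
   Context: $\mathcal P(X)$ is the power set of $X$. For $\mathcal C\subseteq\mathcal P(X)$, a map $T:\mathcal C\to\mathcal C$ is an order reversing quasi involution on $\mathcal C$ if for all $K,L\in\mathcal C$: (i) $K\subseteq TTK$, and (ii) $L\subseteq K$ implies $TK\subseteq TL$ (when $\mathcal C=\mathcal P(X)$ this is an order reversing quasi involution on $\mathcal P(X)$). $T:\mathcal C\to\mathcal C$ respects inclusions if for any $K\in\mathcal C$ and any family $(K_i)_{i\in I}\subseteq\mathcal C$ with $K\subseteq\bigcup_{i\in I}K_i$, one has $TK\supseteq\bigcap_{i\in I}TK_i$. *)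

theory Defs
  imports Main
begin

definition oriqi_on :: "'a set set \<Rightarrow> ('a set \<Rightarrow> 'a set) \<Rightarrow> bool" where
  "oriqi_on C T \<longleftrightarrow>
     (\<forall>K\<in>C. T K \<in> C) \<and>
     (\<forall>K\<in>C. K \<subseteq> T (T K)) \<and>
     (\<forall>K\<in>C. \<forall>L\<in>C. L \<subseteq> K \<longrightarrow> T K \<subseteq> T L)"

text \<open>T respects inclusions on C; intersections of families are taken inside X
  (so the empty intersection is X).\<close>
definition respects_inclusions :: "'a set \<Rightarrow> 'a set set \<Rightarrow> ('a set \<Rightarrow> 'a set) \<Rightarrow> bool" where
  "respects_inclusions X C T \<longleftrightarrow>
     (\<forall>K\<in>C. \<forall>F. F \<subseteq> C \<longrightarrow> K \<subseteq> \<Union>F \<longrightarrow> X \<inter> (\<Inter>L\<in>F. T L) \<subseteq> T K)"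

end

theory Submission
  imports Defs
begin

theorem theorem1p6:
  fixes X :: "'a set" and C :: "'a set set" and T :: "'a set \<Rightarrow> 'a set"
  assumes "C \<subseteq> Pow X"
    and "oriqi_on C T"
    and "respects_inclusions X C T"
  shows "\<exists>T'. oriqi_on (Pow X) T' \<and> (\<forall>K\<in>C. T' K = T K)"
proof -
  have TC: "\<And>K. K \<in> C \<Longrightarrow> T K \<in> C" and inv: "\<And>K. K \<in> C \<Longrightarrow> K \<subseteq> T (T K)"
    and mono: "\<And>K L. K \<in> C \<Longrightarrow> L \<in> C \<Longrightarrow> L \<subseteq> K \<Longrightarrow> T K \<subseteq> T L"
    using assms(2) unfolding oriqi_on_def by (simp_all add: subset_iff)
  have ri: "\<And>K F. K \<in> C \<Longrightarrow> F \<subseteq> C \<Longrightarrow> K \<subseteq> \<Union>F \<Longrightarrow> X \<inter> (\<Inter>L\<in>F. T L) \<subseteq> T K"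
    using assms(3) unfolding respects_inclusions_def by (metis (no_types, lifting))
  define T' where "T' A = {y\<in>X. \<forall>a\<in>A. \<exists>L\<in>C. a \<in> L \<and> y \<in> T L}" for A
  have "oriqi_on (Pow X) T'"
    unfolding oriqi_on_def
  proof (intro conjI ballI impI)
    fix K assume "K \<in> Pow X"
    show "T' K \<in> Pow X" unfolding T'_def by auto
    show "K \<subseteq> T' (T' K)"
    proof
      fix a assume a: "a \<in> K"
      have "\<exists>L\<in>C. y \<in> L \<and> a \<in> T L" if y: "y \<in> T' K" for y
      proof -
        from y a obtain L where L: "L \<in> C" "a \<in> L" "y \<in> T L" unfolding T'_def by blast
        then show ?thesis using TC[OF L(1)] inv[OF L(1)] by (intro bexI[of _ "T L"]) auto
      qed
      then show "a \<in> T' (T' K)" using a \<open>K \<in> Pow X\<close> unfolding T'_def by auto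
    qed
  next
    fix K L assume "K \<in> Pow X" "L \<in> Pow X" "L \<subseteq> K"
    then show "T' K \<subseteq> T' L" unfolding T'_def by blast
  qed
  moreover have "\<forall>K\<in>C. T' K = T K"
  proof
    fix K assume K: "K \<in> C"
    have TKX: "T K \<subseteq> X" using TC[OF K] assms(1) by blast
    show "T' K = T K"
    proof
      show "T K \<subseteq> T' K" using K TKX unfolding T'_def by auto
    next
      show "T' K \<subseteq> T K"
      proof
        fix y assume y: "y \<in> T' K"
        let ?F = "{L\<in>C. y \<in> T L}"
        have "K \<subseteq> \<Union>?F" using y unfolding T'_def by blast
        moreover have "?F \<subseteq> C" by blast
        ultimately have "X \<inter> (\<Inter>L\<in>?F. T L) \<subseteq> T K" by (intro ri[OF K])
        moreover have "y \<in> X \<inter> (\<Inter>L\<in>?F. T L)" using y unfolding T'_def by blast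
        ultimately show "y \<in> T K" by blast
      qed
    qed
  qed
  ultimately show ?thesis by blast
qed

end
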